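(* Let $(\mathbf d_n)$ be a family of degree sequences and $(k_n)$ positive integers with $k_n\le n$ and $k_n=o\big((n^2/m_2)^{2/3}\wedge(n^3/m_3)^{1/3}\big)$. Then, with $k=k_n$, \[g_n(k)=\exp\Big(-\frac{k^2\sigma^2}{2n}\Big)\Big(1+O\Big(\frac{k^{3/2}m_2}{n^2}+\frac{k^3m_3}{n^3}\Big)\Big).\]
   Context: A degree sequence is $\mathbf d_n=(d_1,\ldots,d_n)\in\mathbb N_0^n$ with $\sum_j d_j=n$ (dependence on $n$ suppressed); $m_j=\sum_i d_i^j$, $\sigma^2=m_2/n-1$, $x\wedge y=\min\{x,y\}$. $\langle n\rangle_k=n!/(n-k)!$ and $g_n(k)=\frac{k!}{\langle n\rangle_k}\sum_{1\le i_1<\cdots<i_k\le n}\prod_{j=1}^k d_{i_j}$. Asymptotics are as $n\to\infty$. *)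

theory Defs
  imports "HOL-Analysis.Analysis" "HOL-Library.Landau_Symbols"
begin

text \<open>A degree sequence of length n is d :: nat \<Rightarrow> nat on indices 1..n.\<close>

definition moment :: "nat \<Rightarrow> (nat \<Rightarrow> nat) \<Rightarrow> nat \<Rightarrow> real" where
  "moment j d n = (\<Sum>i=1..n. real (d i) ^ j)"

definition sigma2 :: "(nat \<Rightarrow> nat) \<Rightarrow> nat \<Rightarrow> real" where
  "sigma2 d n = moment 2 d n / real n - 1"

definition falling_fact :: "nat \<Rightarrow> nat \<Rightarrow> real" where
  "falling_fact n k = fact n / fact (n - k)"

definition gfun :: "(nat \<Rightarrow> nat) \<Rightarrow> nat \<Rightarrow> nat \<Rightarrow> real" where
  "gfun d n k = fact k / falling_fact n k *
     (\<Sum>S\<in>{S. S \<subseteq> {1..n} \<and> card S = k}. \<Prod>i\<in>S. real (d i))"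

end

theory Submission
  imports Defs
begin


definition esym :: "(nat \<Rightarrow> real) \<Rightarrow> nat set \<Rightarrow> nat \<Rightarrow> real" where
  "esym x A j = (\<Sum>S\<in>{S. S \<subseteq> A \<and> card S = j}. \<Prod>i\<in>S. x i)"

lemma esym_0: "finite A \<Longrightarrow> esym x A 0 = 1"
proof -
  assume "finite A"
  then have "{S. S \<subseteq> A \<and> card S = 0} = {{}}" by (auto simp: card_eq_0_iff dest: finite_subset)
  then show ?thesis by (simp add: esym_def)
qed

lemma esym_empty_Suc: "esym x {} (Suc j) = 0"
  by (simp add: esym_def)

lemma esym_insert:
  assumes "finite A" "a \<notin> A"
  shows "esym x (insert a A) (Suc j) = esym x A (Suc j) + x a * esym x A j"
proof -
  let ?P = "{S. S \<subseteq> insert a A \<and> card S = Suc j}"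
  let ?B = "{S. S \<subseteq> A \<and> card S = Suc j}"
  let ?C = "{S. S \<subseteq> A \<and> card S = j}"
  have fin: "finite ?P" using assms by (auto intro: finite_subset[of _ "Pow (insert a A)"])
  have split: "?P = ?B \<union> insert a ` ?C"
  proof (intro set_eqI iffI)
    fix S assume S: "S \<in> ?P"
    show "S \<in> ?B \<union> insert a ` ?C"
    proof (cases "a \<in> S")
      case True
      have "S - {a} \<in> ?C" using S True assms
        by (auto simp: card_Diff_singleton finite_subset)
      moreover have "S = insert a (S - {a})" using True by auto
      ultimately show ?thesis by blast
    next
      case False then show ?thesis using S by auto
    qed
  next
    fix S assume "S \<in> ?B \<union> insert a ` ?C"
    then show "S \<in> ?P" using assms
      by (auto simp: card_insert_if finite_subset)
  qed
  have disj: "?B \<inter> insert a ` ?C = {}" using assms by auto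
  have finB: "finite ?B" using assms by (auto intro: finite_subset[of _ "Pow A"])
  have finC: "finite ?C" using assms by (auto intro: finite_subset[of _ "Pow A"])
  have inj: "inj_on (insert a) ?C"
  proof (rule inj_onI)
    fix X Y assume "X \<in> ?C" "Y \<in> ?C" "insert a X = insert a Y"
    then have "insert a X - {a} = insert a Y - {a}" "a \<notin> X" "a \<notin> Y" using assms by auto
    then show "X = Y" by simp
  qed
  have "esym x (insert a A) (Suc j) = (\<Sum>S\<in>?B. \<Prod>i\<in>S. x i) + (\<Sum>S\<in>insert a ` ?C. \<Prod>i\<in>S. x i)"
    unfolding esym_def split by (rule sum.union_disjoint) (use finB finC disj in auto)
  also have "(\<Sum>S\<in>insert a ` ?C. \<Prod>i\<in>S. x i) = (\<Sum>S\<in>?C. \<Prod>i\<in>insert a S. x i)"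
    by (simp add: sum.reindex[OF inj])
  also have "\<dots> = (\<Sum>S\<in>?C. x a * (\<Prod>i\<in>S. x i))"
  proof (rule sum.cong)
    fix S assume "S \<in> ?C"
    then have "finite S" "a \<notin> S" using assms by (auto intro: finite_subset)
    then show "(\<Prod>i\<in>insert a S. x i) = x a * (\<Prod>i\<in>S. x i)" by simp
  qed simp
  finally show ?thesis by (simp add: esym_def sum_distrib_left)
qed

lemma esym_1: "finite A \<Longrightarrow> esym x A 1 = (\<Sum>i\<in>A. x i)"
proof (induction A rule: finite_induct)
  case empty then show ?case using esym_empty_Suc[of x 0] by simp
next
  case (insert a A) then show ?case using esym_insert[of A a x 0] by (simp add: esym_0)
qed

lemma esym_nonneg: "(\<And>i. x i \<ge> 0) \<Longrightarrow> esym x A j \<ge> 0"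
  unfolding esym_def by (intro sum_nonneg prod_nonneg) auto

lemma esym_newton:
  assumes "finite A"
  shows "real (Suc j) * esym x A (Suc j) = (\<Sum>i\<in>A. x i * esym x (A - {i}) j)"
  using assms
proof (induction A arbitrary: j rule: finite_induct)
  case empty then show ?case by (simp add: esym_empty_Suc)
next
  case (insert a A)
  have eq: "\<And>i. i \<in> A \<Longrightarrow> insert a A - {i} = insert a (A - {i})" using insert by auto
  have sumA: "(\<Sum>i\<in>insert a A. x i * esym x (insert a A - {i}) j)
      = x a * esym x A j + (\<Sum>i\<in>A. x i * esym x (insert a (A - {i})) j)"
    using insert by (simp add: eq)
  show ?case
  proof (cases j)
    case 0
    have "(\<Sum>i\<in>A. x i * esym x (insert a (A - {i})) 0) = (\<Sum>i\<in>A. x i)"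
      using insert by (simp add: esym_0)
    then show ?thesis using sumA insert 0 esym_1[of "insert a A" x] by (simp add: esym_0)
  next
    case (Suc m)
    have "(\<Sum>i\<in>A. x i * esym x (insert a (A - {i})) (Suc m))
        = (\<Sum>i\<in>A. x i * esym x (A - {i}) (Suc m)) + x a * (\<Sum>i\<in>A. x i * esym x (A - {i}) m)"
      using insert by (simp add: esym_insert algebra_simps sum.distrib sum_distrib_left)
    also have "\<dots> = real (Suc (Suc m)) * esym x A (Suc (Suc m)) + x a * (real (Suc m) * esym x A (Suc m))"
      by (simp only: insert.IH)
    finally have h: "(\<Sum>i\<in>A. x i * esym x (insert a (A - {i})) (Suc m)) = \<dots>" .
    show ?thesis using sumA h insert Suc by (simp add: esym_insert algebra_simps)
  qed
qed

lemma esym_remove: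
  assumes "finite A" "i \<in> A"
  shows "esym x A (Suc j) = esym x (A - {i}) (Suc j) + x i * esym x (A - {i}) j"
proof -
  have "A = insert i (A - {i})" using assms by auto
  then show ?thesis using esym_insert[of "A - {i}" i x j] assms by simp
qed

lemma esym_remove_le:
  assumes "finite A" "\<And>i. x i \<ge> 0"
  shows "esym x (A - {i}) m \<le> esym x A m"
proof (cases "i \<in> A")
  case False then show ?thesis by simp
next
  case True
  show ?thesis
  proof (cases m)
    case 0 then show ?thesis using assms by (simp add: esym_0)
  next
    case (Suc j)
    then show ?thesis using esym_remove[OF assms(1) True, of x j] assms(2)[of i]
      esym_nonneg[of x "A - {i}" j] assms(2) by simp
  qed
qed

lemma esym_remove_ge:
  assumes "finite A" "\<And>i. x i \<ge> 0"
  shows "esym x A m - x i * esym x A (m - 1) \<le> esym x (A - {i}) m"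
proof (cases "i \<in> A")
  case False
  then show ?thesis using assms esym_nonneg[of x A "m - 1"] by simp
next
  case True
  show ?thesis
  proof (cases m)
    case 0 then show ?thesis using assms by (simp add: esym_0)
  next
    case (Suc j)
    have "x i * esym x (A - {i}) j \<le> x i * esym x A j"
      using esym_remove_le[OF assms, where i=i and m=j] assms(2)[of i] by (simp add: mult_left_mono)
    then show ?thesis using esym_remove[OF assms(1) True, of x j] Suc by simp
  qed
qed

lemma newton_dec:
  assumes "finite A" "\<And>i. x i \<ge> 0"
  shows "real (Suc j) * esym x A (Suc j) \<le> (\<Sum>i\<in>A. x i) * esym x A j"
proof -
  have "real (Suc j) * esym x A (Suc j) = (\<Sum>i\<in>A. x i * esym x (A - {i}) j)"
    by (rule esym_newton[OF assms(1)])
  also have "\<dots> \<le> (\<Sum>i\<in>A. x i * esym x A j)"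
    by (intro sum_mono mult_left_mono esym_remove_le assms)
  finally show ?thesis by (simp add: sum_distrib_right)
qed

lemma newton_low:
  assumes "finite A" "\<And>i. x i \<ge> 0"
  shows "(\<Sum>i\<in>A. x i) * esym x A j - (\<Sum>i\<in>A. x i ^ 2) * esym x A (j - 1)
           \<le> real (Suc j) * esym x A (Suc j)"
proof -
  have "(\<Sum>i\<in>A. x i) * esym x A j - (\<Sum>i\<in>A. x i ^ 2) * esym x A (j - 1)
       = (\<Sum>i\<in>A. x i * (esym x A j - x i * esym x A (j - 1)))"
    by (simp add: sum_distrib_right sum_distrib_left sum_subtractf algebra_simps power2_eq_square)
  also have "\<dots> \<le> (\<Sum>i\<in>A. x i * esym x (A - {i}) j)"
    by (intro sum_mono mult_left_mono esym_remove_ge assms)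
  also have "\<dots> = real (Suc j) * esym x A (Suc j)"
    by (rule esym_newton[OF assms(1), symmetric])
  finally show ?thesis .
qed

lemma newton_up:
  assumes "finite A" "\<And>i. x i \<ge> 0"
  shows "real (Suc (Suc m)) * esym x A (Suc (Suc m)) \<le>
     (\<Sum>i\<in>A. x i) * esym x A (Suc m) - (\<Sum>i\<in>A. x i ^ 2) * esym x A m
       + (\<Sum>i\<in>A. x i ^ 3) * esym x A (m - 1)"
proof -
  have "real (Suc (Suc m)) * esym x A (Suc (Suc m)) = (\<Sum>i\<in>A. x i * esym x (A - {i}) (Suc m))"
    by (rule esym_newton[OF assms(1)])
  also have "\<dots> \<le> (\<Sum>i\<in>A. x i * (esym x A (Suc m) - x i * (esym x A m - x i * esym x A (m - 1))))"
  proof (intro sum_mono mult_left_mono assms(2))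
    fix i assume "i \<in> A"
    have e: "esym x A (Suc m) = esym x (A - {i}) (Suc m) + x i * esym x (A - {i}) m"
      by (rule esym_remove[OF assms(1) \<open>i \<in> A\<close>])
    have "x i * (esym x A m - x i * esym x A (m - 1)) \<le> x i * esym x (A - {i}) m"
      by (intro mult_left_mono esym_remove_ge assms)
    then show "esym x (A - {i}) (Suc m) \<le> esym x A (Suc m) - x i * (esym x A m - x i * esym x A (m - 1))"
      using e by simp
  qed
  also have "\<dots> = (\<Sum>i\<in>A. x i) * esym x A (Suc m) - (\<Sum>i\<in>A. x i ^ 2) * esym x A m
       + (\<Sum>i\<in>A. x i ^ 3) * esym x A (m - 1)"
    by (simp add: sum_distrib_right sum_distrib_left sum_subtractf sum.distrib algebra_simps power2_eq_square power3_eq_cube)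
  finally show ?thesis .
qed



lemma poly_aux1:
  fixes u :: real assumes "0 \<le> u" "u \<le> 1/8"
  shows "1 \<le> (1 + 4 * u) * (1 - u - 4 * u^2)"
proof -
  have "u * (8 * u + 16 * u^2) \<le> u * 3"
  proof (rule mult_left_mono)
    have "u * u \<le> (1/8) * (1/8)" using assms by (intro mult_mono) auto
    then have "u^2 \<le> 1/64" by (simp add: power2_eq_square)
    then show "8 * u + 16 * u\<^sup>2 \<le> 3" using assms by simp
  qed (use assms in simp)
  then show ?thesis by (simp add: algebra_simps power2_eq_square power3_eq_cube)
qed

lemma seq_step1:
  fixes a :: "nat \<Rightarrow> real" and s2 :: real
  assumes a0: "a 0 = 1" and a1: "a 1 = 1"
    and low: "\<And>j. j \<ge> 1 \<Longrightarrow> a j - real j * s2 * a (j - 1) \<le> a (Suc j)"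
    and s2: "0 \<le> s2" and small: "8 * real k * s2 \<le> 1"
  shows "j < k \<Longrightarrow> 0 < a j \<and> (1 - real j * s2 - 4 * (real j * s2)^2) * a j \<le> a (Suc j)"
proof (induction j)
  case 0 then show ?case using a0 a1 by simp
next
  case (Suc j)
  then have IH: "0 < a j" "(1 - real j * s2 - 4 * (real j * s2)^2) * a j \<le> a (Suc j)" by auto
  define u where "u = real j * s2"
  have u0: "0 \<le> u" using s2 by (simp add: u_def)
  have "real j * s2 \<le> real k * s2" using Suc.prems s2 by (intro mult_right_mono) auto
  then have u8: "u \<le> 1/8" using small by (simp add: u_def)
  have "u * u \<le> (1/8) * (1/8)" using u0 u8 by (intro mult_mono) auto
  then have "u^2 \<le> 1/64" by (simp add: power2_eq_square)
  then have c: "1/2 \<le> 1 - u - 4 * u^2" using u8 by simp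
  have pos: "0 < a (Suc j)"
  proof -
    have "0 < (1 - u - 4 * u^2) * a j" using c IH(1) by simp
    then show ?thesis using IH(2) by (simp add: u_def)
  qed
  have key: "a j \<le> (1 + 4 * (real (Suc j) * s2)) * a (Suc j)"
  proof -
    have "a j \<le> (1 + 4 * u) * (1 - u - 4 * u^2) * a j"
      using poly_aux1[OF u0 u8] IH(1) by simp
    also have "\<dots> \<le> (1 + 4 * u) * a (Suc j)"
      using IH(2) u0 by (simp add: u_def mult.assoc mult_left_mono)
    also have "\<dots> \<le> (1 + 4 * (real (Suc j) * s2)) * a (Suc j)"
      using pos s2 by (intro mult_right_mono) (auto simp: u_def intro!: mult_right_mono)
    finally show ?thesis .
  qed
  have l: "a (Suc j) - real (Suc j) * s2 * a j \<le> a (Suc (Suc j))"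
    using low[of "Suc j"] by simp
  have "real (Suc j) * s2 * a j \<le> real (Suc j) * s2 * ((1 + 4 * (real (Suc j) * s2)) * a (Suc j))"
    using key s2 by (intro mult_left_mono) auto
  then have "(1 - real (Suc j) * s2 - 4 * (real (Suc j) * s2)^2) * a (Suc j) \<le> a (Suc j) - real (Suc j) * s2 * a j"
    by (simp add: algebra_simps power2_eq_square)
  with l pos show ?case by linarith
qed

lemma seq_half:
  fixes a :: "nat \<Rightarrow> real" and s2 :: real
  assumes a0: "a 0 = 1" and a1: "a 1 = 1"
    and low: "\<And>j. j \<ge> 1 \<Longrightarrow> a j - real j * s2 * a (j - 1) \<le> a (Suc j)"
    and s2: "0 \<le> s2" and small: "8 * real k * s2 \<le> 1" and j: "j < k"
  shows "0 < a j" "a j \<le> 2 * a (Suc j)"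
proof -
  note st = seq_step1[OF a0 a1 low s2 small j]
  show "0 < a j" using st by simp
  define u where "u = real j * s2"
  have u0: "0 \<le> u" using s2 by (simp add: u_def)
  have "real j * s2 \<le> real k * s2" using j s2 by (intro mult_right_mono) auto
  then have u8: "u \<le> 1/8" using small by (simp add: u_def)
  have "u * u \<le> (1/8) * (1/8)" using u0 u8 by (intro mult_mono) auto
  then have "u^2 \<le> 1/64" by (simp add: power2_eq_square)
  then have c: "1/2 \<le> 1 - u - 4 * u^2" using u8 by simp
  have "(1/2) * a j \<le> (1 - u - 4 * u^2) * a j" using c st by (intro mult_right_mono) auto
  moreover have "(1 - u - 4 * u^2) * a j \<le> a (Suc j)" using st by (simp add: u_def)
  ultimately show "a j \<le> 2 * a (Suc j)" by linarith
qed

lemma seq_step2: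
  fixes a :: "nat \<Rightarrow> real" and s2 s3 :: real
  assumes a0: "a 0 = 1" and a1: "a 1 = 1"
    and dec: "\<And>j. a (Suc j) \<le> a j"
    and low: "\<And>j. j \<ge> 1 \<Longrightarrow> a j - real j * s2 * a (j - 1) \<le> a (Suc j)"
    and up2: "a 2 \<le> 1 - s2 + s3"
    and up: "\<And>m. m \<ge> 1 \<Longrightarrow> a (Suc (Suc m)) \<le> a (Suc m) - real (Suc m) * s2 * a m
                 + real (Suc m) * real m * s3 * a (m - 1)"
    and s2: "0 \<le> s2" and s3: "0 \<le> s3" and small: "8 * real k * s2 \<le> 1" and j: "j < k"
  shows "a (Suc j) \<le> (1 - real j * s2 + 4 * real j ^ 2 * s3) * a j"
proof -
  consider "j = 0" | "j = 1" | m where "j = Suc m" "m \<ge> 1"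
  proof (cases j)
    case (Suc m) then show ?thesis using that by (cases m) auto
  qed (use that in auto)
  then show ?thesis
  proof cases
    case 1 then show ?thesis using a0 a1 by simp
  next
    case 2 then show ?thesis using a1 up2 s3 by (simp add: numeral_2_eq_2)
  next
    case 3
    have mk: "m - 1 < k" using j 3 by arith
    have h1: "a (m - 1) \<le> 2 * a m" using seq_half(2)[OF a0 a1 low s2 small mk] 3 by simp
    have h2: "a m \<le> 2 * a (Suc m)" using seq_half(2)[OF a0 a1 low s2 small, of m] j 3 by simp
    have d: "a (Suc m) \<le> a m" by (rule dec)
    have pos: "0 < a (Suc m)" using seq_half(1)[OF a0 a1 low s2 small, of "Suc m"] j 3 by simp
    have t1: "real (Suc m) * s2 * a (Suc m) \<le> real (Suc m) * s2 * a m"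
      using d s2 by (intro mult_left_mono) auto
    have "real (Suc m) * real m * s3 * a (m - 1) \<le> real (Suc m) * real (Suc m) * s3 * (4 * a (Suc m))"
    proof (rule mult_mono)
      show "a (m - 1) \<le> 4 * a (Suc m)" using h1 h2 by simp
      have "m - 1 < k" using j 3 by arith
      then show "0 \<le> a (m - 1)" using seq_half(1)[OF a0 a1 low s2 small, of "m - 1"] by simp
      show "real (Suc m) * real m * s3 \<le> real (Suc m) * real (Suc m) * s3"
        using s3 by (intro mult_right_mono) auto
      show "0 \<le> real (Suc m) * real (Suc m) * s3" using s3 by simp
    qed
    then have t2: "real (Suc m) * real m * s3 * a (m - 1) \<le> 4 * real (Suc m) ^ 2 * s3 * a (Suc m)"
      by (simp add: power2_eq_square mult_ac)
    have "a (Suc (Suc m)) \<le> a (Suc m) - real (Suc m) * s2 * a (Suc m) + 4 * real (Suc m) ^ 2 * s3 * a (Suc m)"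
      using up[OF 3(2)] t1 t2 by linarith
    then show ?thesis using 3 by (simp add: algebra_simps)
  qed
qed

lemma seq_ln:
  fixes a :: "nat \<Rightarrow> real" and s2 s3 :: real
  assumes a0: "a 0 = 1" and a1: "a 1 = 1"
    and dec: "\<And>j. a (Suc j) \<le> a j"
    and low: "\<And>j. j \<ge> 1 \<Longrightarrow> a j - real j * s2 * a (j - 1) \<le> a (Suc j)"
    and up2: "a 2 \<le> 1 - s2 + s3"
    and up: "\<And>m. m \<ge> 1 \<Longrightarrow> a (Suc (Suc m)) \<le> a (Suc m) - real (Suc m) * s2 * a m
                 + real (Suc m) * real m * s3 * a (m - 1)"
    and s2: "0 \<le> s2" and s3: "0 \<le> s3" and small: "8 * real k * s2 \<le> 1"
  shows "j \<le> k \<Longrightarrow> 0 < a j \<and>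
     - s2 * real j * (real j - 1) / 2 - 12 * s2^2 * real j ^ 3 \<le> ln (a j) \<and>
     ln (a j) \<le> - s2 * real j * (real j - 1) / 2 + 4 * s3 * real j ^ 3"
proof (induction j)
  case 0 then show ?case using a0 by simp
next
  case (Suc j)
  then have jk: "j < k" by simp
  from Suc jk have IH: "0 < a j"
     "- s2 * real j * (real j - 1) / 2 - 12 * s2^2 * real j ^ 3 \<le> ln (a j)"
     "ln (a j) \<le> - s2 * real j * (real j - 1) / 2 + 4 * s3 * real j ^ 3" by auto
  have h: "a j \<le> 2 * a (Suc j)" by (rule seq_half(2)[OF a0 a1 low s2 small jk])
  have pos: "0 < a (Suc j)" using h IH(1) by simp
  define r where "r = a (Suc j) / a j"
  have rpos: "0 < r" using pos IH(1) by (simp add: r_def)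
  have asuc: "a (Suc j) = a j * r" using IH(1) by (simp add: r_def)
  have lnsuc: "ln (a (Suc j)) = ln (a j) + ln r" using asuc IH(1) rpos by (simp add: ln_mult)
  define u where "u = real j * s2"
  have u0: "0 \<le> u" using s2 by (simp add: u_def)
  have "real j * s2 \<le> real k * s2" using jk s2 by (intro mult_right_mono) auto
  then have u8: "u \<le> 1/8" using small by (simp add: u_def)
  have uu: "u * u \<le> u * (1/8)" using u0 u8 by (intro mult_left_mono) auto
  define y where "y = u + 4 * u^2"
  have y0: "0 \<le> y" using u0 by (simp add: y_def)
  have y2u: "y \<le> 2 * u" using uu u0 by (simp add: y_def power2_eq_square)
  have yh: "y \<le> 1/2" using y2u u8 by simp
  have yy: "y^2 \<le> 4 * u^2"
  proof -
    have "y * y \<le> (2 * u) * (2 * u)" using y0 y2u by (intro mult_mono) auto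
    then show ?thesis by (simp add: power2_eq_square)
  qed
  have st1: "(1 - y) * a j \<le> a (Suc j)"
    using seq_step1[OF a0 a1 low s2 small jk] by (simp add: y_def u_def diff_diff_eq[symmetric])
  have rlow: "1 - y \<le> r" using st1 IH(1) by (simp add: r_def pos_le_divide_eq)
  have st2: "a (Suc j) \<le> (1 - real j * s2 + 4 * real j ^ 2 * s3) * a j"
    by (rule seq_step2[OF a0 a1 dec low up2 up s2 s3 small jk])
  have rup: "r \<le> 1 - u + 4 * real j ^ 2 * s3" using st2 IH(1) by (simp add: r_def divide_le_eq u_def)
  have lnlow: "- u - 12 * u^2 \<le> ln r"
  proof -
    have "- y - 2 * y^2 \<le> ln (1 - y)" by (rule ln_one_minus_pos_lower_bound[OF y0 yh])
    also have "\<dots> \<le> ln r" using rlow yh by simp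
    finally show ?thesis using yy by (simp add: y_def)
  qed
  have lnup: "ln r \<le> - u + 4 * real j ^ 2 * s3" using ln_le_minus_one[OF rpos] rup by simp
  have cube: "real j ^ 3 + real j ^ 2 \<le> real (Suc j) ^ 3"
    by (simp add: power2_eq_square power3_eq_cube algebra_simps)
  have c2: "s2^2 * (real j ^ 3 + real j ^ 2) \<le> s2^2 * real (Suc j) ^ 3"
    using cube by (intro mult_left_mono) auto
  have c3: "s3 * (real j ^ 3 + real j ^ 2) \<le> s3 * real (Suc j) ^ 3"
    using cube s3 by (intro mult_left_mono) auto
  have e1: "- s2 * real (Suc j) * (real (Suc j) - 1) / 2 = - s2 * real j * (real j - 1) / 2 - u"
    unfolding u_def by (simp add: field_simps)
  have e2: "u^2 = s2^2 * real j ^ 2" by (simp add: u_def power_mult_distrib)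
  define P where "P = - s2 * real j * (real j - 1) / 2"
  define P' where "P' = - s2 * real (Suc j) * (real (Suc j) - 1) / 2"
  define Q where "Q = s2^2 * real j ^ 3"
  define R where "R = s2^2 * real j ^ 2"
  define S where "S = s2^2 * real (Suc j) ^ 3"
  define Q3 where "Q3 = s3 * real j ^ 3"
  define R3 where "R3 = s3 * real j ^ 2"
  define S3 where "S3 = s3 * real (Suc j) ^ 3"
  have f1: "P - 12 * Q \<le> ln (a j)" using IH(2) by (simp add: P_def Q_def mult.assoc)
  have f2: "ln (a j) \<le> P + 4 * Q3" using IH(3) by (simp add: P_def Q3_def mult.assoc)
  have f3: "- u - 12 * R \<le> ln r" using lnlow e2 by (simp add: R_def)
  have f4: "ln r \<le> - u + 4 * R3" using lnup by (simp add: R3_def mult.commute mult.left_commute)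
  have f5: "Q + R \<le> S" using c2 by (simp add: Q_def R_def S_def distrib_left)
  have f6: "Q3 + R3 \<le> S3" using c3 by (simp add: Q3_def R3_def S3_def distrib_left)
  have f7: "P' = P - u" using e1 by (simp add: P_def P'_def)
  show ?case
  proof (intro conjI pos)
    have "P' - 12 * S \<le> ln (a (Suc j))" using f1 f3 f5 f7 lnsuc by linarith
    then show "- s2 * real (Suc j) * (real (Suc j) - 1) / 2 - 12 * s2\<^sup>2 * real (Suc j) ^ 3 \<le> ln (a (Suc j))"
      by (simp add: P'_def S_def mult.assoc)
    have "ln (a (Suc j)) \<le> P' + 4 * S3" using f2 f4 f6 f7 lnsuc by linarith
    then show "ln (a (Suc j)) \<le> - s2 * real (Suc j) * (real (Suc j) - 1) / 2 + 4 * s3 * real (Suc j) ^ 3"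
      by (simp add: P'_def S3_def mult.assoc)
  qed
qed



lemma esym_ln:
  fixes x :: "nat \<Rightarrow> real" and A :: "nat set"
  assumes fin: "finite A" and nn: "\<And>i. x i \<ge> 0" and s1: "(\<Sum>i\<in>A. x i) = 1"
  defines "s2 \<equiv> (\<Sum>i\<in>A. x i ^ 2)" and "s3 \<equiv> (\<Sum>i\<in>A. x i ^ 3)"
  assumes small: "8 * real k * s2 \<le> 1"
  shows "0 < fact k * esym x A k \<and>
     - s2 * real k * (real k - 1) / 2 - 12 * s2^2 * real k ^ 3 \<le> ln (fact k * esym x A k) \<and>
     ln (fact k * esym x A k) \<le> - s2 * real k * (real k - 1) / 2 + 4 * s3 * real k ^ 3"
proof -
  define a where "a j = fact j * esym x A j" for j
  have a0: "a 0 = 1" by (simp add: a_def esym_0 fin)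
  have a1: "a 1 = 1" using esym_1[OF fin, of x] s1 by (simp add: a_def)
  have aS: "a (Suc j) = fact j * (real (Suc j) * esym x A (Suc j))" for j
    by (simp add: a_def algebra_simps)
  have dec: "a (Suc j) \<le> a j" for j
  proof -
    have "fact j * (real (Suc j) * esym x A (Suc j)) \<le> fact j * ((\<Sum>i\<in>A. x i) * esym x A j)"
      by (intro mult_left_mono newton_dec fin nn) simp
    then show ?thesis by (simp add: aS s1 a_def)
  qed
  have low: "a j - real j * s2 * a (j - 1) \<le> a (Suc j)" if "j \<ge> 1" for j
  proof -
    have "fact j * ((\<Sum>i\<in>A. x i) * esym x A j - (\<Sum>i\<in>A. x i ^ 2) * esym x A (j - 1))
          \<le> fact j * (real (Suc j) * esym x A (Suc j))"
      by (intro mult_left_mono newton_low fin nn) simp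
    moreover have "fact j = real j * fact (j - 1)" using that
      by (metis Suc_diff_1 fact_Suc less_le_trans less_numeral_extra(1) of_nat_fact of_nat_mult)
    ultimately show ?thesis by (simp add: aS s1 a_def s2_def algebra_simps)
  qed
  have up2: "a 2 \<le> 1 - s2 + s3"
  proof -
    have "real (Suc (Suc 0)) * esym x A (Suc (Suc 0)) \<le> (\<Sum>i\<in>A. x i) * esym x A (Suc 0)
       - (\<Sum>i\<in>A. x i ^ 2) * esym x A 0 + (\<Sum>i\<in>A. x i ^ 3) * esym x A (0 - 1)"
      by (rule newton_up[OF fin nn])
    then show ?thesis using esym_1[OF fin, of x] by (simp add: a_def esym_0 fin s1 s2_def s3_def numeral_2_eq_2)
  qed
  have up: "a (Suc (Suc m)) \<le> a (Suc m) - real (Suc m) * s2 * a m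
                 + real (Suc m) * real m * s3 * a (m - 1)" if "m \<ge> 1" for m
  proof -
    have "fact (Suc m) * (real (Suc (Suc m)) * esym x A (Suc (Suc m))) \<le> fact (Suc m) * ((\<Sum>i\<in>A. x i) * esym x A (Suc m)
       - (\<Sum>i\<in>A. x i ^ 2) * esym x A m + (\<Sum>i\<in>A. x i ^ 3) * esym x A (m - 1))"
      by (intro mult_left_mono newton_up fin nn) simp
    moreover have "fact m = real m * fact (m - 1)" using that
      by (metis Suc_diff_1 fact_Suc less_le_trans less_numeral_extra(1) of_nat_fact of_nat_mult)
    moreover have "fact (Suc m) = real (Suc m) * fact m" by simp
    ultimately show ?thesis by (simp add: aS[of "Suc m"] s1 a_def s2_def s3_def algebra_simps)
  qed
  have s2n: "0 \<le> s2" unfolding s2_def by (intro sum_nonneg) auto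
  have s3n: "0 \<le> s3" unfolding s3_def using nn by (intro sum_nonneg) auto
  show ?thesis using seq_ln[OF a0 a1 dec low up2 up s2n s3n small, of k] by (simp add: a_def)
qed



lemma ff_Suc:
  assumes "Suc k \<le> n"
  shows "falling_fact n (Suc k) = falling_fact n k * real (n - k)"
proof -
  have "fact (n - k) = real (n - k) * fact (n - Suc k)"
    using assms by (metis Suc_diff_Suc Suc_le_lessD fact_Suc of_nat_fact of_nat_mult)
  moreover have "real (n - k) \<noteq> 0" using assms by simp
  ultimately show ?thesis unfolding falling_fact_def
    by (simp del: of_nat_diff)
qed

lemma ff_pos: "k \<le> n \<Longrightarrow> falling_fact n k > 0"
  by (simp add: falling_fact_def)

lemma ff_ln:
  assumes n: "1 \<le> n"
  shows "2 * real k \<le> real n \<Longrightarrow>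
    real k * (real k - 1) / (2 * real n) \<le> ln (real n ^ k / falling_fact n k) \<and>
    ln (real n ^ k / falling_fact n k) \<le> real k * (real k - 1) / (2 * real n) + 2 * real k ^ 3 / real n ^ 2"
proof (induction k)
  case 0 then show ?case by (simp add: falling_fact_def)
next
  case (Suc k)
  have "0 \<le> real (Suc k)" by simp
  then have "real (Suc k) \<le> real n" using Suc.prems by (smt (verit))
  then have kn: "Suc k \<le> n" by (simp only: of_nat_le_iff)
  from Suc have IH: "real k * (real k - 1) / (2 * real n) \<le> ln (real n ^ k / falling_fact n k)"
     "ln (real n ^ k / falling_fact n k) \<le> real k * (real k - 1) / (2 * real n) + 2 * real k ^ 3 / real n ^ 2"
    by auto
  have npos: "0 < real n" using n by simp
  define x where "x = real k / real n"
  have x0: "0 \<le> x" by (simp add: x_def)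
  have xh: "x \<le> 1/2" using Suc.prems npos by (simp add: x_def divide_le_eq)
  have nk: "real (n - k) = real n * (1 - x)" using kn npos by (simp add: x_def of_nat_diff field_simps)
  have ffp: "0 < falling_fact n k" using kn by (intro ff_pos) simp
  have split: "real n ^ Suc k / falling_fact n (Suc k) = (real n ^ k / falling_fact n k) * (1 / (1 - x))"
  proof -
    have ffS: "falling_fact n (Suc k) = falling_fact n k * (real n * (1 - x))"
      using ff_Suc[OF kn] nk by simp
    have "1 - x \<noteq> 0" using xh by simp
    then show ?thesis unfolding ffS using npos ffp by (simp add: field_simps)
  qed
  have p1: "0 < real n ^ k / falling_fact n k" using ffp npos by simp
  have p2: "0 < 1 / (1 - x)" using xh by simp
  have lnsplit: "ln (real n ^ Suc k / falling_fact n (Suc k)) = ln (real n ^ k / falling_fact n k) - ln (1 - x)"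
  proof -
    have "ln (real n ^ Suc k / falling_fact n (Suc k)) = ln ((real n ^ k / falling_fact n k) * (1 / (1 - x)))"
      by (simp only: split)
    also have "\<dots> = ln (real n ^ k / falling_fact n k) + ln (1 / (1 - x))" by (rule ln_mult_pos[OF p1 p2])
    also have "ln (1 / (1 - x)) = ln 1 - ln (1 - x)" using xh by (intro ln_divide_pos) auto
    finally show ?thesis by simp
  qed
  have l1: "ln (1 - x) \<le> - x" using ln_le_minus_one[of "1 - x"] xh by simp
  have l2: "- x - 2 * x^2 \<le> ln (1 - x)" by (rule ln_one_minus_pos_lower_bound[OF x0 xh])
  have e1: "real (Suc k) * (real (Suc k) - 1) / (2 * real n) = real k * (real k - 1) / (2 * real n) + x"
    using npos by (simp add: x_def field_simps)
  have e2: "x^2 = real k ^ 2 / real n ^ 2" by (simp add: x_def power_divide)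
  have c: "2 * real k ^ 3 / real n ^ 2 + 2 * (real k ^ 2 / real n ^ 2) \<le> 2 * real (Suc k) ^ 3 / real n ^ 2"
  proof -
    have "real k ^ 3 + real k ^ 2 \<le> real (Suc k) ^ 3"
      by (simp add: power2_eq_square power3_eq_cube algebra_simps)
    then have "2 * (real k ^ 3 + real k ^ 2) / real n ^ 2 \<le> 2 * real (Suc k) ^ 3 / real n ^ 2"
      by (intro divide_right_mono) auto
    moreover have "2 * real k ^ 3 / real n ^ 2 + 2 * (real k ^ 2 / real n ^ 2) = 2 * (real k ^ 3 + real k ^ 2) / real n ^ 2"
      by (simp add: add_divide_distrib)
    ultimately show ?thesis by simp
  qed
  show ?case using IH lnsplit l1 l2 e1 e2 c by (simp only:) linarith
qed



lemma cs_aux: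
  fixes x :: "nat \<Rightarrow> real"
  assumes "finite A" "card A = N" "N \<ge> 1" "(\<Sum>i\<in>A. x i) = 1"
  shows "1 / real N \<le> (\<Sum>i\<in>A. x i ^ 2)"
proof -
  define c where "c = 1 / real N"
  have "0 \<le> (\<Sum>i\<in>A. (x i - c)^2)" by (intro sum_nonneg) auto
  also have "\<dots> = (\<Sum>i\<in>A. x i ^ 2) - 2 * c * (\<Sum>i\<in>A. x i) + real N * c^2"
  proof -
    have "(\<Sum>i\<in>A. (x i - c)^2) = (\<Sum>i\<in>A. x i ^ 2 - 2 * c * x i + c^2)"
      by (intro sum.cong) (auto simp: power2_diff mult_ac)
    also have "\<dots> = (\<Sum>i\<in>A. x i ^ 2) - 2 * c * (\<Sum>i\<in>A. x i) + real N * c^2"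
      using assms by (simp add: sum.distrib sum_subtractf sum_distrib_left[symmetric])
    finally show ?thesis .
  qed
  also have "\<dots> = (\<Sum>i\<in>A. x i ^ 2) - c"
    using assms by (simp add: c_def power2_eq_square)
  finally show ?thesis by (simp add: c_def)
qed

lemma lin_aux1: "(a::real) \<le> u \<Longrightarrow> 0 \<le> b \<Longrightarrow> 0 \<le> u \<Longrightarrow> (a - b) / 2 \<le> u"
  by (simp add: field_simps)

lemma exp_sub_one_bound:
  fixes t :: real assumes "\<bar>t\<bar> \<le> 1/2"
  shows "\<bar>exp t - 1\<bar> \<le> 2 * \<bar>t\<bar>"
proof (cases "t \<ge> 0")
  case True
  then have "exp t \<le> 1 + 2 * t" using assms by (intro real_exp_bound_lemma) auto
  moreover have "1 \<le> exp t" using True by simp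
  ultimately show ?thesis using True by simp
next
  case False
  have "1 + t \<le> exp t" by (rule exp_ge_add_one_self)
  moreover have "exp t \<le> 1" using False by simp
  moreover have "\<bar>exp t - 1\<bar> = 1 - exp t" using \<open>exp t \<le> 1\<close> by simp
  moreover have "\<bar>t\<bar> = - t" using False by simp
  ultimately show ?thesis using False by linarith
qed

lemma per_n:
  fixes dd :: "nat \<Rightarrow> nat" and n k :: nat
  assumes deg: "(\<Sum>i=1..n. dd i) = n" and n1: "1 \<le> n" and k1: "1 \<le> k" and kn: "k \<le> n"
    and usmall: "real k powr (3/2) * (moment 2 dd n / real n ^ 2) \<le> 1/100"
    and vsmall: "real k ^ 3 * (moment 3 dd n / real n ^ 3) \<le> 1/100"
  shows "\<bar>gfun dd n k - exp (- (real k ^ 2 * sigma2 dd n) / (2 * real n))\<bar>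
     \<le> 26 * (exp (- (real k ^ 2 * sigma2 dd n) / (2 * real n)) *
            (real k powr (3/2) * moment 2 dd n / real n ^ 2 + real k ^ 3 * moment 3 dd n / real n ^ 3))"
proof -
  define A where "A = {1..n}"
  define x where "x i = real (dd i) / real n" for i
  define s2 where "s2 = (\<Sum>i\<in>A. x i ^ 2)"
  define s3 where "s3 = (\<Sum>i\<in>A. x i ^ 3)"
  define u where "u = real k powr (3/2) * s2"
  define v where "v = real k ^ 3 * s3"
  define Ex where "Ex = exp (- (real k ^ 2 * sigma2 dd n) / (2 * real n))"
  have npos: "0 < real n" using n1 by simp
  have kpos: "1 \<le> real k" using k1 by simp
  have fin: "finite A" by (simp add: A_def)
  have nn: "x i \<ge> 0" for i by (simp add: x_def)
  have s1: "(\<Sum>i\<in>A. x i) = 1"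
  proof -
    have "(\<Sum>i\<in>A. x i) = (\<Sum>i\<in>A. real (dd i)) / real n" by (simp add: x_def sum_divide_distrib)
    also have "(\<Sum>i\<in>A. real (dd i)) = real n" using deg unfolding A_def by (metis of_nat_sum)
    finally show ?thesis using npos by simp
  qed
  have s2m: "s2 = moment 2 dd n / real n ^ 2"
    by (simp add: s2_def moment_def A_def x_def power_divide sum_divide_distrib)
  have s3m: "s3 = moment 3 dd n / real n ^ 3"
    by (simp add: s3_def moment_def A_def x_def power_divide sum_divide_distrib)
  have uu: "u \<le> 1/100" using usmall by (simp add: u_def s2m)
  have vv: "v \<le> 1/100" using vsmall by (simp add: v_def s3m)
  have s2n: "0 \<le> s2" by (simp add: s2_def sum_nonneg)
  have s3n: "0 \<le> s3" unfolding s3_def using nn by (intro sum_nonneg) auto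
  have u0: "0 \<le> u" using s2n by (simp add: u_def)
  have v0: "0 \<le> v" using s3n by (simp add: v_def)
  have cs: "1 / real n \<le> s2" unfolding s2_def using cs_aux[OF fin _ n1 s1] by (simp add: A_def)
  have kp: "real k \<le> real k powr (3/2)"
  proof -
    have "real k powr 1 \<le> real k powr (3/2)" using kpos by (intro powr_mono) auto
    then show ?thesis using kpos by simp
  qed
  have ks2: "real k * s2 \<le> u" unfolding u_def using kp s2n by (rule mult_right_mono)
  have kp2: "(real k powr (3/2))^2 = real k ^ 3"
  proof -
    have "(real k powr (3/2))^2 = real k powr (real 2 * (3/2))" using kpos by (intro powr_power) auto
    also have "\<dots> = real k powr 3" by simp
    also have "\<dots> = real k ^ 3" using kpos by (simp add: powr_numeral)
    finally show ?thesis .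
  qed
  have u2: "u^2 = s2^2 * real k ^ 3" by (simp add: u_def power_mult_distrib kp2)
  have small: "8 * real k * s2 \<le> 1" using ks2 uu by simp
  have kn2: "2 * real k \<le> real n"
  proof -
    have "real k / real n \<le> real k * s2" using cs kpos by (simp add: divide_le_eq)
    then have "real k / real n \<le> 1/2" using ks2 uu by simp
    then show ?thesis using npos by (simp add: divide_le_eq)
  qed
  define F where "F = real n ^ k / falling_fact n k"
  define a where "a = fact k * esym x A k"
  have Fb: "real k * (real k - 1) / (2 * real n) \<le> ln F"
           "ln F \<le> real k * (real k - 1) / (2 * real n) + 2 * real k ^ 3 / real n ^ 2"
    using ff_ln[OF n1 kn2] by (simp_all add: F_def)
  have ab: "0 < a" "- s2 * real k * (real k - 1) / 2 - 12 * s2^2 * real k ^ 3 \<le> ln a"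
     "ln a \<le> - s2 * real k * (real k - 1) / 2 + 4 * s3 * real k ^ 3"
    using esym_ln[OF fin nn s1 small[unfolded s2_def]] by (simp_all add: a_def s2_def s3_def)
  have Fpos: "0 < F" using kn npos by (simp add: F_def ff_pos)
  have gsplit: "gfun dd n k = F * a"
  proof -
    have "esym (\<lambda>i. real (dd i)) A k = real n ^ k * esym x A k"
    proof -
      have "(\<Prod>i\<in>S. real (dd i)) = real n ^ k * (\<Prod>i\<in>S. x i)" if "S \<in> {S. S \<subseteq> A \<and> card S = k}" for S
      proof -
        have "(\<Prod>i\<in>S. real (dd i)) = (\<Prod>i\<in>S. real n * x i)" using npos by (simp add: x_def)
        also have "\<dots> = real n ^ card S * (\<Prod>i\<in>S. x i)" by (simp add: prod.distrib)
        finally show ?thesis using that by simp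
      qed
      then show ?thesis unfolding esym_def by (simp add: sum_distrib_left)
    qed
    then show ?thesis unfolding gfun_def F_def a_def A_def[symmetric] esym_def[symmetric]
      by (simp add: field_simps)
  qed
  have gpos: "0 < gfun dd n k" using gsplit Fpos ab(1) by simp
  have lng: "ln (gfun dd n k) = ln F + ln a" using gsplit Fpos ab(1) by (simp add: ln_mult_pos)
  define lE where "lE = - (real k ^ 2 * sigma2 dd n) / (2 * real n)"
  have lE: "lE = - (real k ^ 2 * s2) / 2 + real k ^ 2 / (2 * real n)"
    unfolding lE_def sigma2_def using npos by (simp add: s2m field_simps power2_eq_square)
  define \<delta> where "\<delta> = ln (gfun dd n k) - lE"
  define W where "W = (real k * s2 - real k / real n) / 2"
  have Wid: "\<delta> = (ln F - real k * (real k - 1) / (2 * real n)) + (ln a + s2 * real k * (real k - 1) / 2) + W"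
    unfolding \<delta>_def lng lE W_def using npos by (simp add: field_simps power2_eq_square)
  have W0: "0 \<le> W"
  proof -
    have "real k * (1 / real n) \<le> real k * s2" using cs kpos by (intro mult_left_mono) auto
    then have "real k / real n \<le> real k * s2" by simp
    then show ?thesis by (simp add: W_def)
  qed
  have "0 \<le> real k / real n" by simp
  then have Wu: "W \<le> u" using ks2 u0 unfolding W_def by (intro lin_aux1)
  have n2: "2 * real k ^ 3 / real n ^ 2 \<le> 2 * u^2"
  proof -
    have "(1 / real n) ^ 2 \<le> s2 ^ 2" using cs npos by (intro power_mono) auto
    then have "1 / real n ^ 2 \<le> s2 ^ 2" by (simp add: power_one_over)
    then have "real k ^ 3 * (1 / real n ^ 2) \<le> real k ^ 3 * s2 ^ 2" by (intro mult_left_mono) auto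
    then show ?thesis using u2 by (simp add: mult.commute)
  qed
  have "u * u \<le> u * 1" using u0 uu by (intro mult_left_mono) auto
  then have uu2: "u^2 \<le> u" by (simp add: power2_eq_square)
  have e12: "12 * s2^2 * real k ^ 3 = 12 * u^2" using u2 by simp
  have e4: "4 * s3 * real k ^ 3 = 4 * v" by (simp add: v_def)
  have dlow: "- 12 * u ^ 2 \<le> \<delta>" using Wid Fb ab W0 e12 by linarith
  have dup: "\<delta> \<le> 2 * u^2 + 4 * v + u" using Wid Fb ab Wu e4 n2 by linarith
  have dabs0: "\<bar>\<delta>\<bar> \<le> 13 * u + 13 * v" using dlow dup uu2 u0 v0 unfolding abs_le_iff by (intro conjI; linarith)
  then have dabs: "\<bar>\<delta>\<bar> \<le> 13 * (u + v)" by (simp add: distrib_left)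
  have dh: "\<bar>\<delta>\<bar> \<le> 1/2" using dabs0 uu vv by linarith
  have gE: "gfun dd n k = Ex * exp \<delta>"
  proof -
    have "exp \<delta> = exp (ln (gfun dd n k)) / exp lE" by (simp add: \<delta>_def exp_diff)
    also have "\<dots> = gfun dd n k / Ex" using gpos by (simp add: Ex_def lE_def)
    finally show ?thesis by (simp add: Ex_def)
  qed
  have Exp: "0 < Ex" by (simp add: Ex_def)
  have "\<bar>gfun dd n k - Ex\<bar> = Ex * \<bar>exp \<delta> - 1\<bar>" 
  proof -
    have "gfun dd n k - Ex = Ex * (exp \<delta> - 1)" by (simp add: gE algebra_simps)
    then show ?thesis using Exp by (simp add: abs_mult)
  qed
  also have "\<dots> \<le> Ex * (2 * \<bar>\<delta>\<bar>)" using Exp exp_sub_one_bound[OF dh] by (intro mult_left_mono) auto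
  also have "\<dots> \<le> Ex * (2 * (13 * (u + v)))" using Exp dabs by (intro mult_left_mono) auto
  also have "u + v = real k powr (3/2) * moment 2 dd n / real n ^ 2 + real k ^ 3 * moment 3 dd n / real n ^ 3"
    by (simp add: u_def v_def s2m s3m)
  also have "Ex * (2 * (13 * (real k powr (3/2) * moment 2 dd n / real n ^ 2 + real k ^ 3 * moment 3 dd n / real n ^ 3)))
     = 26 * (Ex * (real k powr (3/2) * moment 2 dd n / real n ^ 2 + real k ^ 3 * moment 3 dd n / real n ^ 3))"
    by (simp only: mult_ac)
  finally show ?thesis unfolding Ex_def .
qed



lemma moment_ge:
  assumes "(\<Sum>i=1..n. dd i) = n" "r \<ge> 1"
  shows "real n \<le> moment r dd n"
proof -
  have "real n = (\<Sum>i=1..n. real (dd i))" using assms(1) by (metis of_nat_sum)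
  also have "\<dots> \<le> (\<Sum>i=1..n. real (dd i) ^ r)"
  proof (intro sum_mono)
    fix i
    show "real (dd i) \<le> real (dd i) ^ r"
    proof (cases "dd i = 0")
      case True then show ?thesis by simp
    next
      case False
      then have "1 \<le> real (dd i)" by simp
      then have "real (dd i) ^ 1 \<le> real (dd i) ^ r" using assms(2) by (intro power_increasing) auto
      then show ?thesis by simp
    qed
  qed
  finally show ?thesis by (simp add: moment_def)
qed

lemma small_conseq:
  fixes dd :: "nat \<Rightarrow> nat" and n k :: nat
  assumes deg: "(\<Sum>i=1..n. dd i) = n" and n1: "1 \<le> n"
    and kb: "norm (real k) \<le> (1/100) * norm (min ((real n ^ 2 / moment 2 dd n) powr (2/3))
                   ((real n ^ 3 / moment 3 dd n) powr (1/3)))"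
  shows "real k powr (3/2) * (moment 2 dd n / real n ^ 2) \<le> 1/100"
        "real k ^ 3 * (moment 3 dd n / real n ^ 3) \<le> 1/100"
proof -
  have npos: "0 < real n" using n1 by simp
  have m2: "0 < moment 2 dd n" using moment_ge[OF deg, of 2] npos by simp
  have m3: "0 < moment 3 dd n" using moment_ge[OF deg, of 3] npos by simp
  define A where "A = real n ^ 2 / moment 2 dd n"
  define B where "B = real n ^ 3 / moment 3 dd n"
  have Ap: "0 < A" using npos m2 by (simp add: A_def)
  have Bp: "0 < B" using npos m3 by (simp add: B_def)
  have Mp: "0 \<le> min (A powr (2/3)) (B powr (1/3))" by simp
  have kA: "real k \<le> (1/100) * A powr (2/3)" and kB: "real k \<le> (1/100) * B powr (1/3)"
    using kb Mp unfolding A_def[symmetric] B_def[symmetric] by (simp_all add: abs_of_nonneg)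
  have k3A: "real k ^ 3 \<le> (1/100)^3 * A ^ 2"
  proof -
    have "real k ^ 3 \<le> ((1/100) * A powr (2/3)) ^ 3" using kA by (intro power_mono) auto
    also have "\<dots> = (1/100)^3 * (A powr (2/3)) ^ 3" by (rule power_mult_distrib)
    also have "(A powr (2/3)) ^ 3 = A powr (real 3 * (2/3))" using Ap by (intro powr_power) auto
    also have "\<dots> = A ^ 2" using Ap by (simp add: powr_numeral)
    finally show ?thesis .
  qed
  have k3B: "real k ^ 3 \<le> (1/100)^3 * B"
  proof -
    have "real k ^ 3 \<le> ((1/100) * B powr (1/3)) ^ 3" using kB by (intro power_mono) auto
    also have "\<dots> = (1/100)^3 * (B powr (1/3)) ^ 3" by (rule power_mult_distrib)
    also have "(B powr (1/3)) ^ 3 = B powr (real 3 * (1/3))" using Bp by (intro powr_power) auto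
    also have "\<dots> = B" using Bp by simp
    finally show ?thesis .
  qed
  have s2A: "moment 2 dd n / real n ^ 2 = 1 / A" by (simp add: A_def)
  have s3B: "moment 3 dd n / real n ^ 3 = 1 / B" by (simp add: B_def)
  show "real k ^ 3 * (moment 3 dd n / real n ^ 3) \<le> 1/100"
  proof -
    have "real k ^ 3 * (1 / B) \<le> (1/100)^3 * B * (1 / B)" using k3B Bp by (intro mult_right_mono) auto
    then have "real k ^ 3 * (1 / B) \<le> (1/100)^3" using Bp by simp
    moreover have "(1/100::real)^3 \<le> 1/100" by (simp add: power3_eq_cube)
    ultimately show ?thesis unfolding s3B by linarith
  qed
  define u where "u = real k powr (3/2) * (moment 2 dd n / real n ^ 2)"
  have u0: "0 \<le> u" using m2 by (simp add: u_def)
  have kp2: "(real k powr (3/2))^2 = real k ^ 3"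
  proof (cases "k = 0")
    case True then show ?thesis by simp
  next
    case False
    then have kpos: "0 < real k" by simp
    have "(real k powr (3/2))^2 = real k powr (real 2 * (3/2))" using kpos by (intro powr_power) auto
    also have "\<dots> = real k powr 3" by simp
    also have "\<dots> = real k ^ 3" using kpos by (simp add: powr_numeral)
    finally show ?thesis .
  qed
  have "u^2 = real k ^ 3 * (1 / A)^2" unfolding u_def s2A power_mult_distrib kp2 by simp
  also have "\<dots> \<le> (1/100)^3 * A^2 * (1/A)^2" using k3A by (intro mult_right_mono) auto
  also have "\<dots> = (1/100)^3" using Ap by (simp add: field_simps)
  also have "\<dots> \<le> (1/100)^2" by (simp add: power3_eq_cube power2_eq_square)
  finally have "u^2 \<le> (1/100)^2" .
  then have "u \<le> 1/100" by (rule power2_le_imp_le) simp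
  then show "real k powr (3/2) * (moment 2 dd n / real n ^ 2) \<le> 1/100" by (simp add: u_def)
qed

theorem lemma3p7:
  fixes d :: "nat \<Rightarrow> nat \<Rightarrow> nat" and k :: "nat \<Rightarrow> nat"
  assumes degseq: "\<And>n. (\<Sum>i=1..n. d n i) = n"
    and kpos: "\<And>n. n \<ge> 1 \<Longrightarrow> 0 < k n \<and> k n \<le> n"
    and ksmall: "(\<lambda>n. real (k n)) \<in>
        o(\<lambda>n. min ((real n ^ 2 / moment 2 (d n) n) powr (2/3))
                   ((real n ^ 3 / moment 3 (d n) n) powr (1/3)))"
  shows "(\<lambda>n. gfun (d n) n (k n) - exp (- (real (k n) ^ 2 * sigma2 (d n) n) / (2 * real n)))
         \<in> O(\<lambda>n. exp (- (real (k n) ^ 2 * sigma2 (d n) n) / (2 * real n)) *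
                 (real (k n) powr (3/2) * moment 2 (d n) n / real n ^ 2
                  + real (k n) ^ 3 * moment 3 (d n) n / real n ^ 3))"
proof (rule bigoI)
  have ev1: "eventually (\<lambda>n. norm (real (k n)) \<le> (1/100) * norm (min ((real n ^ 2 / moment 2 (d n) n) powr (2/3))
                   ((real n ^ 3 / moment 3 (d n) n) powr (1/3)))) at_top"
    using landau_o.smallD[OF ksmall, of "1/100"] by simp
  have ev2: "eventually (\<lambda>n::nat. 1 \<le> n) at_top" by (rule eventually_ge_at_top)
  show "eventually (\<lambda>n. norm (gfun (d n) n (k n) - exp (- (real (k n) ^ 2 * sigma2 (d n) n) / (2 * real n)))
      \<le> 26 * norm (exp (- (real (k n) ^ 2 * sigma2 (d n) n) / (2 * real n)) *
                 (real (k n) powr (3/2) * moment 2 (d n) n / real n ^ 2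
                  + real (k n) ^ 3 * moment 3 (d n) n / real n ^ 3))) at_top"
    using ev1 ev2
  proof eventually_elim
    case (elim n)
    have k1: "1 \<le> k n" and kn: "k n \<le> n" using kpos[OF elim(2)] by auto
    note sc = small_conseq[OF degseq elim(2) elim(1)]
    have b: "\<bar>gfun (d n) n (k n) - exp (- (real (k n) ^ 2 * sigma2 (d n) n) / (2 * real n))\<bar>
     \<le> 26 * (exp (- (real (k n) ^ 2 * sigma2 (d n) n) / (2 * real n)) *
            (real (k n) powr (3/2) * moment 2 (d n) n / real n ^ 2 + real (k n) ^ 3 * moment 3 (d n) n / real n ^ 3))"
      by (rule per_n[OF degseq elim(2) k1 kn sc])
    then show ?case by (simp only: real_norm_def)
  qed
qed

end
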